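(* Let $L_1,\dots,L_n$ be lines in $\mathbb{R}^3$ with $d(L_i,L_j)=1$ for all $1\le i<j\le n$, where $d(L,L')=\min_{x\in L,\,y\in L'}\|x-y\|$. If two of the lines $L_1,\dots,L_n$ are parallel, then $n\le 4$.
   Context: $\|\cdot\|$ is the Euclidean norm on $\mathbb{R}^3$. *)

theory Defs
  imports "HOL-Analysis.Analysis"
begin

definition line3 :: "real^3 \<Rightarrow> real^3 \<Rightarrow> (real^3) set" where
  "line3 p v = {p + t *\<^sub>R v | t. True}"

definition is_line3 :: "(real^3) set \<Rightarrow> bool" where
  "is_line3 L \<longleftrightarrow> (\<exists>p v. v \<noteq> 0 \<and> L = line3 p v)"

text \<open>Distance between two lines: d(L,L') = min over x in L, y in L' of norm (x - y)
 (the infimum, which is attained for lines).\<close>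
definition line_dist :: "(real^3) set \<Rightarrow> (real^3) set \<Rightarrow> real" where
  "line_dist L L' = Inf {norm (x - y) | x y. x \<in> L \<and> y \<in> L'}"

definition parallel_lines :: "(real^3) set \<Rightarrow> (real^3) set \<Rightarrow> bool" where
  "parallel_lines L L' \<longleftrightarrow> (\<exists>p q v. v \<noteq> 0 \<and> L = line3 p v \<and> L' = line3 q v)"

end

theory Submission
  imports Defs
begin

lemma line_dist_eqI:
  assumes "x0 \<in> L" "y0 \<in> M" "norm (x0 - y0) = z" "\<And>x y. x \<in> L \<Longrightarrow> y \<in> M \<Longrightarrow> z \<le> norm (x - y)"
  shows "line_dist L M = z"
  unfolding line_dist_def
  by (rule cInf_eq_minimum) (use assms in auto)

lemma line_dist_sym: "line_dist L M = line_dist M L"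
proof -
  have "{norm (x - y) |x y. x \<in> L \<and> y \<in> M} = {norm (x - y) |x y. x \<in> M \<and> y \<in> L}"
    using norm_minus_commute by blast
  then show ?thesis unfolding line_dist_def by simp
qed

lemma in_line3: "p + t *\<^sub>R v \<in> line3 p v"
  by (auto simp: line3_def)

lemma line3_scale: assumes "c \<noteq> 0" shows "line3 p (c *\<^sub>R v) = line3 p v"
proof
  show "line3 p (c *\<^sub>R v) \<subseteq> line3 p v"
  proof
    fix x assume "x \<in> line3 p (c *\<^sub>R v)"
    then obtain t where "x = p + t *\<^sub>R (c *\<^sub>R v)" by (auto simp: line3_def)
    then have "x = p + (t*c) *\<^sub>R v" by simp
    then show "x \<in> line3 p v" by (simp add: in_line3)
  qed
  show "line3 p v \<subseteq> line3 p (c *\<^sub>R v)"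
  proof
    fix x assume "x \<in> line3 p v"
    then obtain t where "x = p + t *\<^sub>R v" by (auto simp: line3_def)
    then have "x = p + (t/c) *\<^sub>R (c *\<^sub>R v)" using assms by simp
    then show "x \<in> line3 p (c *\<^sub>R v)" using in_line3[of p "t/c" "c *\<^sub>R v"] by simp
  qed
qed

lemma cross_par:
  fixes x y :: "real^3"
  assumes "cross3 x y = 0" "y \<noteq> 0"
  shows "x = ((x \<bullet> y) / (y \<bullet> y)) *\<^sub>R y"
proof -
  have "cross3 y (cross3 y x) = (y \<bullet> x) *\<^sub>R y - (y \<bullet> y) *\<^sub>R x" by (rule Lagrange)
  moreover have "cross3 y x = 0" using assms(1) cross_skew[of y x] by simp
  ultimately have "(y \<bullet> y) *\<^sub>R x = (y \<bullet> x) *\<^sub>R y" by simp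
  moreover have "y \<bullet> y \<noteq> 0" using assms by simp
  ultimately have eq: "(y \<bullet> y) *\<^sub>R x = (y \<bullet> x) *\<^sub>R y" and yy: "y \<bullet> y \<noteq> 0" by auto
  have "x = (1/(y \<bullet> y)) *\<^sub>R ((y \<bullet> y) *\<^sub>R x)" using yy by simp
  also have "\<dots> = ((x \<bullet> y) / (y \<bullet> y)) *\<^sub>R y" unfolding eq by (simp add: inner_commute)
  finally show ?thesis .
qed

lemma dist_par:
  fixes p q v :: "real^3"
  assumes v: "v \<noteq> 0"
  shows "line_dist (line3 p v) (line3 q v) = norm ((p - q) - (((p - q) \<bullet> v) / (v \<bullet> v)) *\<^sub>R v)"
proof -
  define d where "d = p - q"
  define c where "c = (d \<bullet> v) / (v \<bullet> v)"
  define e where "e = d - c *\<^sub>R v"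
  have vv: "v \<bullet> v \<noteq> 0" using v by simp
  have ev: "e \<bullet> v = 0" unfolding e_def c_def using vv by (simp add: inner_diff_left)
  have "line_dist (line3 p v) (line3 q v) = norm e"
  proof (rule line_dist_eqI)
    show "p + (- c) *\<^sub>R v \<in> line3 p v" by (rule in_line3)
    show "q \<in> line3 q v" using in_line3[of q 0 v] by simp
    show "norm (p + (- c) *\<^sub>R v - q) = norm e"
      unfolding e_def d_def by (simp add: algebra_simps)
    fix x y assume "x \<in> line3 p v" "y \<in> line3 q v"
    then obtain s t where x: "x = p + s *\<^sub>R v" and y: "y = q + t *\<^sub>R v" by (auto simp: line3_def)
    define mu where "mu = s - t + c"
    have xy: "x - y = e + mu *\<^sub>R v" unfolding x y e_def mu_def d_def by (simp add: algebra_simps)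
    have "(x - y) \<bullet> (x - y) = e \<bullet> e + mu^2 * (v \<bullet> v)"
      unfolding xy using ev by (simp add: inner_add_left inner_add_right inner_commute power2_eq_square)
    then have "e \<bullet> e \<le> (x - y) \<bullet> (x - y)" by (simp add: add_increasing2)
    then show "norm e \<le> norm (x - y)"
      unfolding norm_le .
  qed
  then show ?thesis unfolding e_def c_def d_def .
qed
lemma solve2:
  fixes A B P Q R D :: real
  assumes D: "D = P*Q - R*R" "D \<noteq> 0"
  shows "A + ((B*R - A*Q)/D)*P - ((B*P - A*R)/D)*R = 0"
    and "B + ((B*R - A*Q)/D)*R - ((B*P - A*R)/D)*Q = 0"
  using D by (simp_all add: field_simps, algebra+)

lemma dist_nonpar:
  fixes p q v w n :: "real^3"
  assumes m: "cross3 v w \<noteq> 0" and n: "n \<noteq> 0" "n \<bullet> v = 0" "n \<bullet> w = 0"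
  shows "line_dist (line3 p v) (line3 q w) = \<bar>(p - q) \<bullet> n\<bar> / norm n"
proof (rule line_dist_eqI)
  define d where "d = p - q"
  define m where "m = cross3 v w"
  define D where "D = (v \<bullet> v) * (w \<bullet> w) - (v \<bullet> w) * (v \<bullet> w)"
  have mm: "m \<bullet> m = D" unfolding m_def D_def dot_cross by (simp add: inner_commute)
  have "m \<noteq> 0" using m m_def by simp
  then have D0: "D \<noteq> 0" using mm by (metis inner_eq_zero_iff)
  define s where "s = ((d \<bullet> w)*(v \<bullet> w) - (d \<bullet> v)*(w \<bullet> w))/D"
  define t where "t = ((d \<bullet> w)*(v \<bullet> v) - (d \<bullet> v)*(v \<bullet> w))/D"
  define r where "r = d + s *\<^sub>R v - t *\<^sub>R w"
  have "r \<bullet> v = (d \<bullet> v) + s * (v \<bullet> v) - t * (v \<bullet> w)"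
    unfolding r_def by (simp add: inner_add_left inner_diff_left inner_commute[of w v])
  also have "\<dots> = 0" unfolding s_def t_def by (rule solve2(1)[OF D_def D0])
  finally have rv: "r \<bullet> v = 0" .
  have "r \<bullet> w = (d \<bullet> w) + s * (v \<bullet> w) - t * (w \<bullet> w)"
    unfolding r_def by (simp add: inner_add_left inner_diff_left)
  also have "\<dots> = 0" unfolding s_def t_def by (rule solve2(2)[OF D_def D0])
  finally have rw: "r \<bullet> w = 0" .
  have "cross3 r m = 0" unfolding m_def Lagrange rv rw by simp
  then have ra: "r = ((r \<bullet> m) / (m \<bullet> m)) *\<^sub>R m" using cross_par \<open>m \<noteq> 0\<close> by blast
  have "cross3 n m = 0" unfolding m_def Lagrange n by simp
  then have na: "n = ((n \<bullet> m) / (m \<bullet> m)) *\<^sub>R m" using cross_par \<open>m \<noteq> 0\<close> by blast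
  have rn: "r \<bullet> n = d \<bullet> n" unfolding r_def using n by (simp add: inner_add_left inner_diff_left inner_add_right inner_diff_right inner_commute[of _ n])
  have "\<bar>r \<bullet> n\<bar> = norm r * norm n"
  proof -
    obtain a b where a: "r = a *\<^sub>R m" and b: "n = b *\<^sub>R m" using ra na by blast
    have "\<bar>r \<bullet> n\<bar> = \<bar>a\<bar> * \<bar>b\<bar> * (norm m * norm m)"
      unfolding a b by (simp add: abs_mult power2_norm_eq_inner[symmetric] power2_eq_square)
    also have "\<dots> = norm r * norm n" unfolding a b by simp
    finally show ?thesis .
  qed
  then have nr: "norm r = \<bar>(p - q) \<bullet> n\<bar> / norm n" using n rn d_def by (simp add: field_simps)
  show "p + s *\<^sub>R v \<in> line3 p v" by (rule in_line3)
  show "q + t *\<^sub>R w \<in> line3 q w" by (rule in_line3)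
  show "norm (p + s *\<^sub>R v - (q + t *\<^sub>R w)) = \<bar>(p - q) \<bullet> n\<bar> / norm n"
    using nr unfolding r_def d_def by (simp add: algebra_simps)
  fix x y assume "x \<in> line3 p v" "y \<in> line3 q w"
  then obtain s' t' where x: "x = p + s' *\<^sub>R v" and y: "y = q + t' *\<^sub>R w" by (auto simp: line3_def)
  have "(x - y) \<bullet> n = (p - q) \<bullet> n" unfolding x y using n
    by (simp add: inner_add_left inner_diff_left inner_add_right inner_diff_right inner_commute[of _ n])
  then have "\<bar>(p - q) \<bullet> n\<bar> \<le> norm (x - y) * norm n" using Cauchy_Schwarz_ineq2[of "x - y" n] by simp
  then show "\<bar>(p - q) \<bullet> n\<bar> / norm n \<le> norm (x - y)" using n by (simp add: divide_le_eq)
qed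
definition perp :: "real^3 \<Rightarrow> real^3 \<Rightarrow> real^3" where
  "perp v x = x - ((x \<bullet> v) / (v \<bullet> v)) *\<^sub>R v"

lemma perp_diff: "perp v (x - y) = perp v x - perp v y"
  unfolding perp_def by (simp add: inner_diff_left diff_divide_distrib algebra_simps)

lemma perp_orth: "v \<noteq> 0 \<Longrightarrow> perp v x \<bullet> v = 0"
  unfolding perp_def by (simp add: inner_diff_left)

lemma perp_decomp: "x = perp v x + ((x \<bullet> v) / (v \<bullet> v)) *\<^sub>R v"
  unfolding perp_def by simp

lemma dist_par': "v \<noteq> 0 \<Longrightarrow> line_dist (line3 p v) (line3 q v) = norm (perp v (p - q))"
  unfolding perp_def by (rule dist_par)

lemma g_nonzero:
  fixes v e :: "real^3"
  assumes "v \<noteq> 0" "e \<bullet> v = 0" "e \<bullet> e = 1"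
  shows "cross3 v e \<bullet> cross3 v e > 0"
proof -
  have "(norm (cross3 v e))\<^sup>2 + (v \<bullet> e)\<^sup>2 = (norm v * norm e)\<^sup>2" by (rule norm_cross_dot)
  moreover have "norm e = 1" using assms(3) by (simp add: norm_eq_1)
  ultimately have "norm (cross3 v e) = norm v" using assms(2) by (simp add: inner_commute)
  then show ?thesis using assms(1) by (metis inner_gt_zero_iff norm_eq_zero)
qed

lemma plane_coord:
  fixes v e x y :: "real^3"
  assumes v: "v \<noteq> 0" and ev: "e \<bullet> v = 0" and ee: "e \<bullet> e = 1" and xv: "x \<bullet> v = 0"
  shows "x \<bullet> y = (x \<bullet> e) * (e \<bullet> y) + (x \<bullet> cross3 v e) * (cross3 v e \<bullet> y) / (cross3 v e \<bullet> cross3 v e)"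
proof -
  define g where "g = cross3 v e"
  have gpos: "g \<bullet> g > 0" unfolding g_def using g_nonzero assms by blast
  then have g0: "g \<noteq> 0" by auto
  define x' where "x' = x - (x \<bullet> e) *\<^sub>R e"
  have x'e: "x' \<bullet> e = 0" unfolding x'_def using ee by (simp add: inner_diff_left)
  have x'v: "x' \<bullet> v = 0" unfolding x'_def using ev xv by (simp add: inner_diff_left)
  have "cross3 x' g = 0" unfolding g_def Lagrange x'e x'v by simp
  then have x'g: "x' = ((x' \<bullet> g) / (g \<bullet> g)) *\<^sub>R g" using cross_par g0 by blast
  have eg: "e \<bullet> g = 0" unfolding g_def by (simp add: dot_cross_self)
  have "x' \<bullet> g = x \<bullet> g" unfolding x'_def using eg by (simp add: inner_diff_left)
  with x'g have "x = (x \<bullet> e) *\<^sub>R e + ((x \<bullet> g) / (g \<bullet> g)) *\<^sub>R g" unfolding x'_def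
    by (metis diff_add_cancel add.commute)
  then have "x \<bullet> y = ((x \<bullet> e) *\<^sub>R e + ((x \<bullet> g) / (g \<bullet> g)) *\<^sub>R g) \<bullet> y" by simp
  also have "\<dots> = (x \<bullet> e) * (e \<bullet> y) + (x \<bullet> g) * (g \<bullet> y) / (g \<bullet> g)"
    by (simp add: inner_add_left)
  finally show ?thesis unfolding g_def .
qed
lemma P_info:
  fixes a b c v :: "real^3"
  assumes v: "v \<noteq> 0" and e: "e = perp v (b - a)" "norm e = 1"
    and d1: "line_dist (line3 a v) (line3 c v) = 1" and d2: "line_dist (line3 b v) (line3 c v) = 1"
  shows "perp v (c - a) \<bullet> v = 0" "perp v (c - a) \<bullet> perp v (c - a) = 1"
    "perp v (c - a) \<bullet> e = 1/2" "((c - a) \<bullet> cross3 v e)^2 = 3/4 * (cross3 v e \<bullet> cross3 v e)"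
    "perp v (c - a) \<bullet> cross3 v e = (c - a) \<bullet> cross3 v e"
proof -
  define f where "f = perp v (c - a)"
  define g where "g = cross3 v e"
  show fv: "perp v (c - a) \<bullet> v = 0" using perp_orth v by blast
  have ev: "e \<bullet> v = 0" using perp_orth v e by blast
  have ee: "e \<bullet> e = 1" using e(2) by (simp add: norm_eq_1)
  have "norm (perp v (a - c)) = 1" using d1 dist_par' v by simp
  moreover have "perp v (a - c) = - f" unfolding f_def using perp_diff[of v a c] perp_diff[of v c a] by simp
  ultimately have "norm f = 1" by simp
  then show ff: "perp v (c - a) \<bullet> perp v (c - a) = 1" unfolding f_def by (simp add: norm_eq_1)
  have "norm (perp v (b - c)) = 1" using d2 dist_par' v by simp
  moreover have "perp v (b - c) = e - f" unfolding f_def e(1)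
    by (metis diff_diff_eq2 perp_diff diff_add_cancel add_diff_cancel_left')
  ultimately have "(e - f) \<bullet> (e - f) = 1" by (simp add: norm_eq_1)
  then have "e \<bullet> e - 2 * (e \<bullet> f) + f \<bullet> f = 1" by (simp add: inner_diff_left inner_diff_right inner_commute)
  then show fe: "perp v (c - a) \<bullet> e = 1/2" using ee ff unfolding f_def by (simp add: inner_commute)
  have vg: "v \<bullet> g = 0" unfolding g_def by (simp add: dot_cross_self)
  show fg: "perp v (c - a) \<bullet> cross3 v e = (c - a) \<bullet> cross3 v e"
    using perp_decomp[of "c - a" v] vg unfolding g_def
    by (metis (no_types, lifting) add_0_right inner_add_left inner_scaleR_left mult_zero_right)
  have gpos: "g \<bullet> g > 0" unfolding g_def using g_nonzero v ev ee by blast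
  have "f \<bullet> f = (f \<bullet> e) * (e \<bullet> f) + (f \<bullet> g) * (g \<bullet> f) / (g \<bullet> g)"
    unfolding g_def by (rule plane_coord[OF v ev ee]) (use fv f_def in simp)
  then have "f \<bullet> f = (f \<bullet> e) * (f \<bullet> e) + (f \<bullet> g) * (f \<bullet> g) / (g \<bullet> g)"
    by (simp only: inner_commute[of e f] inner_commute[of g f])
  moreover have "f \<bullet> e = 1/2" "f \<bullet> f = 1" using fe ff f_def by auto
  ultimately have "1 = 1/4 + (f \<bullet> g)^2 / (g \<bullet> g)"
    by (simp add: power2_eq_square)
  then have "(f \<bullet> g)^2 = 3/4 * (g \<bullet> g)" using gpos by (simp add: field_simps)
  then show "((c - a) \<bullet> cross3 v e)^2 = 3/4 * (cross3 v e \<bullet> cross3 v e)"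
    using fg unfolding f_def g_def by simp
qed
lemma abs_lemma: "\<bar>h\<bar> = N \<Longrightarrow> \<bar>h'\<bar> = N \<Longrightarrow> h' = h + k \<Longrightarrow> \<bar>k\<bar> \<le> N \<Longrightarrow> N > 0 \<Longrightarrow> k = (0::real)"
  by (auto simp: abs_if split: if_splits)

lemma div1: "x / y = (1::real) \<Longrightarrow> x = y"
  by (cases "y = 0") (auto simp: divide_eq_eq)

lemma N_info:
  fixes a b c v w :: "real^3"
  assumes v: "v \<noteq> 0" and e: "e = perp v (b - a)" "norm e = 1" and vw: "cross3 v w \<noteq> 0"
    and d1: "line_dist (line3 a v) (line3 c w) = 1" and d2: "line_dist (line3 b v) (line3 c w) = 1"
  shows "w \<bullet> cross3 v e = 0" "((a - c) \<bullet> cross3 v e)^2 = cross3 v e \<bullet> cross3 v e"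
proof -
  define g where "g = cross3 v e"
  define n where "n = cross3 v w"
  have ev: "e \<bullet> v = 0" using perp_orth v e by blast
  have ee: "e \<bullet> e = 1" using e(2) by (simp add: norm_eq_1)
  have gpos: "g \<bullet> g > 0" unfolding g_def using g_nonzero v ev ee by blast
  then have g0: "g \<noteq> 0" by auto
  have n0: "n \<noteq> 0" using vw n_def by simp
  have nv: "n \<bullet> v = 0" and nw: "n \<bullet> w = 0" unfolding n_def by (simp_all add: dot_cross_self)
  have N: "norm n > 0" using n0 by simp
  have h1: "\<bar>(a - c) \<bullet> n\<bar> = norm n" using dist_nonpar[OF vw n0 nv nw, of a c] d1 N by (simp add: field_simps)
  have h2: "\<bar>(b - c) \<bullet> n\<bar> = norm n" using dist_nonpar[OF vw n0 nv nw, of b c] d2 N by (simp add: field_simps)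
  have "b - a = e + (((b - a) \<bullet> v) / (v \<bullet> v)) *\<^sub>R v" using perp_decomp[of "b - a" v] e by simp
  then have "(b - a) \<bullet> n = (e + (((b - a) \<bullet> v) / (v \<bullet> v)) *\<^sub>R v) \<bullet> n" by simp
  also have "\<dots> = e \<bullet> n" using nv by (simp add: inner_add_left inner_commute[of v n])
  finally have ba: "(b - a) \<bullet> n = e \<bullet> n" .
  have "b - c = (a - c) + (b - a)" by simp
  then have sum: "(b - c) \<bullet> n = (a - c) \<bullet> n + e \<bullet> n" using ba by (simp only: inner_add_left)
  have "\<bar>e \<bullet> n\<bar> \<le> norm e * norm n" by (rule Cauchy_Schwarz_ineq2)
  then have "\<bar>e \<bullet> n\<bar> \<le> norm n" using e(2) by simp
  then have en: "e \<bullet> n = 0" using h1 h2 sum N abs_lemma by metis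
  have "cross3 n g = 0" unfolding g_def Lagrange using en nv by (simp add: inner_commute[of n e])
  then have "cross3 g n = 0" using cross_skew[of g n] by simp
  then have gn: "g = ((g \<bullet> n) / (n \<bullet> n)) *\<^sub>R n" using cross_par n0 by blast
  have wg: "w \<bullet> g = 0" by (subst gn) (simp add: inner_commute nw)
  then show "w \<bullet> cross3 v e = 0" unfolding g_def .
  have gv: "g \<bullet> v = 0" unfolding g_def by (simp add: dot_cross_self)
  have gw: "g \<bullet> w = 0" using wg by (simp add: inner_commute)
  have "\<bar>(a - c) \<bullet> g\<bar> / norm g = 1"
    using dist_nonpar[OF vw g0 gv gw, of a c] d1 by linarith
  then have "\<bar>(a - c) \<bullet> g\<bar> = norm g" by (rule div1)
  then have "((a - c) \<bullet> g)^2 = (norm g)^2" by (metis power2_abs)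
  then show "((a - c) \<bullet> cross3 v e)^2 = cross3 v e \<bullet> cross3 v e"
    unfolding g_def by (simp add: power2_norm_eq_inner)
qed

lemma alg1:
  fixes k h G :: real
  assumes "k^2 = 3/4*G" "h^2 = G" "(k+h)^2 = G" "G > 0" shows False
proof -
  have "k^2 + 2*k*h + h^2 = G" using assms(3) by (simp add: power2_sum)
  then have e: "2*k*h = -3/4*G" using assms(1,2) by linarith
  have "(2*k*h)^2 = 4 * k^2 * h^2" by (simp add: power_mult_distrib)
  also have "\<dots> = 3 * G^2" by (simp only: assms(1,2)) (simp add: power2_eq_square)
  finally have "9/16 * G^2 = 3 * G^2" using e by (simp add: power2_eq_square)
  then show False using assms(4) by simp
qed

lemma alg2:
  fixes k h G :: real
  assumes "k^2 = 3/4*G" "h^2 = 3/4*G" "k*h = G/4" "G > 0" shows False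
proof -
  have "(k*h)^2 = k^2 * h^2" by (simp add: power_mult_distrib)
  also have "\<dots> = 9/16 * G^2" by (simp only: assms(1,2)) (simp add: power2_eq_square)
  finally have "(G/4)^2 = 9/16 * G^2" using assms(3) by simp
  then have "G^2/16 = 9/16 * G^2" by (simp add: power_divide)
  then show False using assms(4) by simp
qed

lemma alg3:
  fixes k h G :: real
  assumes "k^2 = G" "h^2 = G" "(h - k)^2 = G" "G > 0" shows False
proof -
  have "h^2 - 2*k*h + k^2 = G" using assms(3) by (simp add: power2_diff algebra_simps)
  then have e: "2*k*h = G" using assms(1,2) by linarith
  have "(2*k*h)^2 = 4 * k^2 * h^2" by (simp add: power_mult_distrib)
  also have "\<dots> = 4 * G^2" by (simp only: assms(1,2)) (simp add: power2_eq_square)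
  finally have "G^2 = 4 * G^2" using e by simp
  then show False using assms(4) by simp
qed

lemma base_info:
  fixes a b v :: "real^3"
  assumes v: "v \<noteq> 0" and ab: "line_dist (line3 a v) (line3 b v) = 1"
  shows "norm (perp v (b - a)) = 1" "perp v (b - a) \<bullet> v = 0" "perp v (b - a) \<bullet> perp v (b - a) = 1"
    "cross3 v (perp v (b - a)) \<bullet> cross3 v (perp v (b - a)) > 0"
proof -
  define e where "e = perp v (b - a)"
  have "norm (perp v (a - b)) = 1" using ab dist_par' v by simp
  moreover have "perp v (a - b) = - e" unfolding e_def using perp_diff[of v a b] perp_diff[of v b a] by simp
  ultimately have ne: "norm e = 1" by simp
  have ev: "e \<bullet> v = 0" using perp_orth v e_def by blast
  have ee: "e \<bullet> e = 1" using ne by (simp add: norm_eq_1)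
  show "norm (perp v (b - a)) = 1" "perp v (b - a) \<bullet> v = 0" "perp v (b - a) \<bullet> perp v (b - a) = 1"
    using ne ev ee e_def by auto
  show "cross3 v (perp v (b - a)) \<bullet> cross3 v (perp v (b - a)) > 0" using g_nonzero v ev ee e_def by blast
qed

lemma norm_g_eq:
  assumes "\<bar>x\<bar> / norm (g::real^3) = 1" shows "x^2 = g \<bullet> g"
proof -
  have "\<bar>x\<bar> = norm g" using assms by (rule div1)
  then have "x^2 = (norm g)^2" by (metis power2_abs)
  then show ?thesis by (simp add: power2_norm_eq_inner)
qed

lemma core:
  fixes a b c d v w :: "real^3"
  assumes v: "v \<noteq> 0" and w: "w \<noteq> 0"
    and ab: "line_dist (line3 a v) (line3 b v) = 1"
    and ac: "line_dist (line3 a v) (line3 c v) = 1" and bc: "line_dist (line3 b v) (line3 c v) = 1"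
    and ad: "line_dist (line3 a v) (line3 d w) = 1" and bd: "line_dist (line3 b v) (line3 d w) = 1"
    and cd: "line_dist (line3 c v) (line3 d w) = 1"
  shows False
proof -
  define e where "e = perp v (b - a)"
  define g where "g = cross3 v e"
  note B = base_info[OF v ab, folded e_def, folded g_def]
  have ne: "norm e = 1" and ev: "e \<bullet> v = 0" and ee: "e \<bullet> e = 1" and gpos: "g \<bullet> g > 0" using B by auto
  then have g0: "g \<noteq> 0" by auto
  note Pc = P_info[OF v e_def ne ac bc, folded g_def]
  show False
  proof (cases "cross3 v w = 0")
    case True
    have "cross3 w v = 0" using True cross_skew[of w v] by simp
    then have wv: "w = ((w \<bullet> v) / (v \<bullet> v)) *\<^sub>R v" using cross_par v by blast
    moreover have "(w \<bullet> v) / (v \<bullet> v) \<noteq> 0" using w wv by (metis scale_zero_left)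
    ultimately have lw: "line3 d w = line3 d v" using line3_scale by metis
    note Pd = P_info[OF v e_def ne ad[unfolded lw] bd[unfolded lw], folded g_def]
    define f1 where "f1 = perp v (c - a)"
    define f2 where "f2 = perp v (d - a)"
    have "norm (perp v (c - d)) = 1" using cd[unfolded lw] dist_par' v by simp
    moreover have "perp v (c - d) = f1 - f2" unfolding f1_def f2_def
      using perp_diff[of v "c - a" "d - a"] by simp
    ultimately have "(f1 - f2) \<bullet> (f1 - f2) = 1" by (simp add: norm_eq_1)
    then have "f1 \<bullet> f1 - 2 * (f1 \<bullet> f2) + f2 \<bullet> f2 = 1" by (simp add: inner_diff_left inner_diff_right inner_commute)
    then have f12: "f1 \<bullet> f2 = 1/2" using Pc(2) Pd(2) f1_def f2_def by simp
    have "f1 \<bullet> f2 = (f1 \<bullet> e) * (e \<bullet> f2) + (f1 \<bullet> g) * (g \<bullet> f2) / (g \<bullet> g)"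
      unfolding g_def by (rule plane_coord[OF v ev ee]) (use Pc(1) f1_def in simp)
    then have "f1 \<bullet> f2 = (f1 \<bullet> e) * (f2 \<bullet> e) + (f1 \<bullet> g) * (f2 \<bullet> g) / (g \<bullet> g)"
      by (simp only: inner_commute[of e f2] inner_commute[of g f2])
    moreover have "f1 \<bullet> e = 1/2" "f2 \<bullet> e = 1/2" using Pc(3) Pd(3) f1_def f2_def by auto
    moreover have "f1 \<bullet> g = (c - a) \<bullet> g" "f2 \<bullet> g = (d - a) \<bullet> g" using Pc(5) Pd(5) f1_def f2_def by auto
    ultimately have "1/2 = 1/4 + ((c - a) \<bullet> g) * ((d - a) \<bullet> g) / (g \<bullet> g)" using f12 by simp
    then have k: "((c - a) \<bullet> g) * ((d - a) \<bullet> g) = (g \<bullet> g) / 4" using gpos by (simp add: field_simps)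
    show False using alg2[OF Pc(4) Pd(4) k gpos] .
  next
    case False
    note Nd = N_info[OF v e_def ne False ad bd, folded g_def]
    have gv: "g \<bullet> v = 0" unfolding g_def by (simp add: dot_cross_self)
    have wg: "g \<bullet> w = 0" using Nd(1) by (simp add: inner_commute)
    have "\<bar>(c - d) \<bullet> g\<bar> / norm g = 1"
      using dist_nonpar[OF False g0 gv wg, of c d] cd by linarith
    then have cdg: "((c - d) \<bullet> g)^2 = g \<bullet> g" by (rule norm_g_eq)
    have "(c - d) \<bullet> g = (c - a) \<bullet> g + (a - d) \<bullet> g" by (simp add: inner_diff_left)
    with cdg have "((c - a) \<bullet> g + (a - d) \<bullet> g)^2 = g \<bullet> g" by simp
    from alg1[OF Pc(4) Nd(2) this gpos] show False .
  qed
qed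

lemma NN:
  fixes a b c1 c2 v w1 w2 :: "real^3"
  assumes v: "v \<noteq> 0"
    and ab: "line_dist (line3 a v) (line3 b v) = 1"
    and n1: "cross3 v w1 \<noteq> 0" and n2: "cross3 v w2 \<noteq> 0"
    and a1: "line_dist (line3 a v) (line3 c1 w1) = 1" and b1: "line_dist (line3 b v) (line3 c1 w1) = 1"
    and a2: "line_dist (line3 a v) (line3 c2 w2) = 1" and b2: "line_dist (line3 b v) (line3 c2 w2) = 1"
    and d12: "line_dist (line3 c1 w1) (line3 c2 w2) = 1"
  shows "cross3 w1 w2 = 0"
proof (rule ccontr)
  assume m: "cross3 w1 w2 \<noteq> 0"
  define e where "e = perp v (b - a)"
  define g where "g = cross3 v e"
  note B = base_info[OF v ab, folded e_def, folded g_def]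
  have ne: "norm e = 1" and gpos: "g \<bullet> g > 0" using B by auto
  then have g0: "g \<noteq> 0" by auto
  note N1 = N_info[OF v e_def ne n1 a1 b1, folded g_def]
  note N2 = N_info[OF v e_def ne n2 a2 b2, folded g_def]
  have g1: "g \<bullet> w1 = 0" and g2: "g \<bullet> w2 = 0" using N1(1) N2(1) by (simp_all add: inner_commute)
  have "\<bar>(c1 - c2) \<bullet> g\<bar> / norm g = 1"
    using dist_nonpar[OF m g0 g1 g2, of c1 c2] d12 by linarith
  then have cdg: "((c1 - c2) \<bullet> g)^2 = g \<bullet> g" by (rule norm_g_eq)
  have "(c1 - c2) \<bullet> g = (a - c2) \<bullet> g - (a - c1) \<bullet> g" by (simp add: inner_diff_left)
  with cdg have "((a - c2) \<bullet> g - (a - c1) \<bullet> g)^2 = g \<bullet> g" by simp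
  from alg3[OF N1(2) N2(2) this gpos] show False .
qed
lemma par_line:
  fixes v w d :: "real^3"
  assumes "cross3 w v = 0" "v \<noteq> 0" "w \<noteq> 0"
  shows "line3 d w = line3 d v"
proof -
  have wv: "w = ((w \<bullet> v) / (v \<bullet> v)) *\<^sub>R v" using cross_par assms by blast
  moreover have "(w \<bullet> v) / (v \<bullet> v) \<noteq> 0" using assms(3) wv by (metis scale_zero_left)
  ultimately show ?thesis using line3_scale by metis
qed

lemma no_five:
  fixes a b c1 c2 c3 v w1 w2 w3 :: "real^3"
  assumes v: "v \<noteq> 0" and w1: "w1 \<noteq> 0" and w2: "w2 \<noteq> 0" and w3: "w3 \<noteq> 0"
    and ab: "line_dist (line3 a v) (line3 b v) = 1"
    and a1: "line_dist (line3 a v) (line3 c1 w1) = 1" and b1: "line_dist (line3 b v) (line3 c1 w1) = 1"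
    and a2: "line_dist (line3 a v) (line3 c2 w2) = 1" and b2: "line_dist (line3 b v) (line3 c2 w2) = 1"
    and a3: "line_dist (line3 a v) (line3 c3 w3) = 1" and b3: "line_dist (line3 b v) (line3 c3 w3) = 1"
    and d12: "line_dist (line3 c1 w1) (line3 c2 w2) = 1"
    and d13: "line_dist (line3 c1 w1) (line3 c3 w3) = 1"
    and d23: "line_dist (line3 c2 w2) (line3 c3 w3) = 1"
  shows False
proof -
  note sym = line_dist_sym
  have n1: "cross3 v w1 \<noteq> 0"
  proof
    assume "cross3 v w1 = 0"
    then have "cross3 w1 v = 0" using cross_skew[of w1 v] by simp
    then have l: "line3 c1 w1 = line3 c1 v" using par_line v w1 by blast
    show False using core[OF v w2 ab a1[unfolded l] b1[unfolded l] a2 b2 d12[unfolded l]] .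
  qed
  have n2: "cross3 v w2 \<noteq> 0"
  proof
    assume "cross3 v w2 = 0"
    then have "cross3 w2 v = 0" using cross_skew[of w2 v] by simp
    then have l: "line3 c2 w2 = line3 c2 v" using par_line v w2 by blast
    show False using core[OF v w1 ab a2[unfolded l] b2[unfolded l] a1 b1 d12[unfolded sym[of "line3 c1 w1"] l]] .
  qed
  have n3: "cross3 v w3 \<noteq> 0"
  proof
    assume "cross3 v w3 = 0"
    then have "cross3 w3 v = 0" using cross_skew[of w3 v] by simp
    then have l: "line3 c3 w3 = line3 c3 v" using par_line v w3 by blast
    show False using core[OF v w1 ab a3[unfolded l] b3[unfolded l] a1 b1 d13[unfolded sym[of "line3 c1 w1"] l]] .
  qed
  have "cross3 w1 w2 = 0" by (rule NN[OF v ab n1 n2 a1 b1 a2 b2 d12])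
  then have "cross3 w2 w1 = 0" using cross_skew[of w2 w1] by simp
  then have l2: "line3 c2 w2 = line3 c2 w1" using par_line w1 w2 by blast
  have "cross3 w1 w3 = 0" by (rule NN[OF v ab n1 n3 a1 b1 a3 b3 d13])
  then have "cross3 w3 w1 = 0" using cross_skew[of w3 w1] by simp
  then have l3: "line3 c3 w3 = line3 c3 w1" using par_line w1 w3 by blast
  show False
    using core[OF w1 v d12[unfolded l2] d13[unfolded l3] d23[unfolded l2 l3]
        a1[unfolded sym[of "line3 a v"]] a2[unfolded sym[of "line3 a v"] l2]
        a3[unfolded sym[of "line3 a v"] l3]] .
qed
theorem mainTheorem4:
  fixes L :: "nat \<Rightarrow> (real^3) set" and n :: nat
  assumes lines: "\<And>i. 1 \<le> i \<Longrightarrow> i \<le> n \<Longrightarrow> is_line3 (L i)"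
    and dist: "\<And>i j. 1 \<le> i \<Longrightarrow> i < j \<Longrightarrow> j \<le> n \<Longrightarrow> line_dist (L i) (L j) = 1"
    and par: "\<exists>i j. 1 \<le> i \<and> i < j \<and> j \<le> n \<and> parallel_lines (L i) (L j)"
  shows "n \<le> 4"
proof (rule ccontr)
  assume "\<not> n \<le> 4"
  then have n5: "n \<ge> 5" by simp
  have D: "line_dist (L k) (L l) = 1" if "k \<in> {1..n}" "l \<in> {1..n}" "k \<noteq> l" for k l
  proof (cases "k < l")
    case True then show ?thesis using dist that by auto
  next
    case False then have "l < k" using that by simp
    then show ?thesis using dist[of l k] that line_dist_sym by auto
  qed
  obtain i j where ij: "1 \<le> i" "i < j" "j \<le> n" "parallel_lines (L i) (L j)" using par by blast
  then obtain a b v where v: "v \<noteq> 0" and Li: "L i = line3 a v" and Lj: "L j = line3 b v"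
    unfolding parallel_lines_def by blast
  define T where "T = {1..n} - {i, j}"
  have "card T = n - 2" unfolding T_def using ij by (subst card_Diff_subset) auto
  then have "3 \<le> card T" using n5 by simp
  then obtain S where S: "S \<subseteq> T" "card S = 3" by (meson obtain_subset_with_card_n)
  then obtain k1 k2 k3 where k: "S = {k1, k2, k3}" "k1 \<noteq> k2" "k2 \<noteq> k3" "k1 \<noteq> k3"
    by (auto simp: card_3_iff)
  have kT: "k1 \<in> T" "k2 \<in> T" "k3 \<in> T" using S k by auto
  have kn: "k1 \<in> {1..n}" "k2 \<in> {1..n}" "k3 \<in> {1..n}" "k1 \<noteq> i" "k1 \<noteq> j" "k2 \<noteq> i" "k2 \<noteq> j"
     "k3 \<noteq> i" "k3 \<noteq> j" using kT unfolding T_def by auto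
  have ijn: "i \<in> {1..n}" "j \<in> {1..n}" "i \<noteq> j" using ij by auto
  obtain c1 w1 where w1: "w1 \<noteq> 0" "L k1 = line3 c1 w1" using lines kn(1) unfolding is_line3_def by fastforce
  obtain c2 w2 where w2: "w2 \<noteq> 0" "L k2 = line3 c2 w2" using lines kn(2) unfolding is_line3_def by fastforce
  obtain c3 w3 where w3: "w3 \<noteq> 0" "L k3 = line3 c3 w3" using lines kn(3) unfolding is_line3_def by fastforce
  show False
    apply (rule no_five[OF v w1(1) w2(1) w3(1), of a b c1 c2 c3])
    using D[of i j] D[of i k1] D[of j k1] D[of i k2] D[of j k2] D[of i k3] D[of j k3]
      D[of k1 k2] D[of k1 k3] D[of k2 k3] ijn kn k Li Lj w1 w2 w3
    by auto
qed

end
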